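(* There exists no undirected graph $G=(V,E)$ for which there is a set $B=\{((u_i,v_i),x_i): 1\le i\le4\}\subseteq\mathcal{D}\times[0,1]$ that is shattered by $\mathcal{F}^+=\{R_w: w\in V\}$ and such that there are at least three distinct indices $j',j'',j'''\in\{1,2,3,4\}$ with $\sigma_{u_{j'}v_{j'}}=\sigma_{u_{j''}v_{j''}}=\sigma_{u_{j'''}v_{j'''}}=1$.
   Context: $\mathcal{D}=\{(u,v)\in V\times V: u\ne v\}$. $\sigma_{uv}$ is the number of shortest paths from $u$ to $v$, $\sigma_{uv}(w)$ the number of those to which $w$ is internal ($w\ne u,v$, path through $w$); $f_w(u,v)=\sigma_{uv}(w)/\sigma_{uv}$ ($0$ if $\sigma_{uv}=0$). For $w\in V$, $R_w=\{((u,v),x)\in\mathcal{D}\times[0,1]: x\le f_w(u,v)\}$. A set $B$ is shattered by $\mathcal{F}^+$ if $\{R\cap B: R\in\mathcal{F}^+\}$ equals the power set of $B$. *)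

theory Defs
  imports Complex_Main
begin

definition ugraph :: "'a set \<Rightarrow> ('a \<times> 'a) set \<Rightarrow> bool" where
  "ugraph V E \<longleftrightarrow> finite V \<and> E \<subseteq> V \<times> V \<and> sym E \<and> irrefl E"

definition is_path :: "'a set \<Rightarrow> ('a \<times> 'a) set \<Rightarrow> 'a list \<Rightarrow> 'a \<Rightarrow> 'a \<Rightarrow> bool" where
  "is_path V E p u v \<longleftrightarrow> p \<noteq> [] \<and> hd p = u \<and> last p = v \<and> set p \<subseteq> V \<and>
     (\<forall>i. Suc i < length p \<longrightarrow> (p ! i, p ! Suc i) \<in> E)"

definition shortest_paths :: "'a set \<Rightarrow> ('a \<times> 'a) set \<Rightarrow> 'a \<Rightarrow> 'a \<Rightarrow> 'a list set" where
  "shortest_paths V E u v = {p. is_path V E p u v \<and>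
     (\<forall>q. is_path V E q u v \<longrightarrow> length p \<le> length q)}"

definition sigma :: "'a set \<Rightarrow> ('a \<times> 'a) set \<Rightarrow> 'a \<Rightarrow> 'a \<Rightarrow> nat" where
  "sigma V E u v = card (shortest_paths V E u v)"

definition sigma_via :: "'a set \<Rightarrow> ('a \<times> 'a) set \<Rightarrow> 'a \<Rightarrow> 'a \<Rightarrow> 'a \<Rightarrow> nat" where
  "sigma_via V E u v w = card {p \<in> shortest_paths V E u v. w \<in> set p \<and> w \<noteq> u \<and> w \<noteq> v}"

definition fw :: "'a set \<Rightarrow> ('a \<times> 'a) set \<Rightarrow> 'a \<Rightarrow> 'a \<Rightarrow> 'a \<Rightarrow> real" where
  "fw V E w u v = (if sigma V E u v = 0 then 0
                   else real (sigma_via V E u v w) / real (sigma V E u v))"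

definition Dset :: "'a set \<Rightarrow> ('a \<times> 'a) set" where
  "Dset V = {(u, v) \<in> V \<times> V. u \<noteq> v}"

definition Rw :: "'a set \<Rightarrow> ('a \<times> 'a) set \<Rightarrow> 'a \<Rightarrow> (('a \<times> 'a) \<times> real) set" where
  "Rw V E w = {((u, v), x). (u, v) \<in> Dset V \<and> x \<in> {0..1} \<and> x \<le> fw V E w u v}"

definition shattered :: "'b set set \<Rightarrow> 'b set \<Rightarrow> bool" where
  "shattered F B \<longleftrightarrow> (\<lambda>R. R \<inter> B) ` F = Pow B"

end

theory Submission imports Defs begin

lemma succ_iff: "(\<forall>i. Suc i < length xs \<longrightarrow> P (xs!i) (xs!Suc i)) \<longleftrightarrow> successively P xs"
proof (induction xs)
  case Nil then show ?case by simp
next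
  case (Cons x xs)
  show ?case
  proof (cases xs)
    case Nil then show ?thesis by simp
  next
    case (Cons y ys)
    have "(\<forall>i. Suc i < length (x#xs) \<longrightarrow> P ((x#xs)!i) ((x#xs)!Suc i)) \<longleftrightarrow>
          P x y \<and> (\<forall>i. Suc i < length xs \<longrightarrow> P (xs!i) (xs!Suc i))"
      using Cons by (auto simp: nth_Cons split: nat.splits)
    then show ?thesis using Cons \<open>_ = successively P xs\<close> by simp
  qed
qed

definition E' :: "('a \<times> 'a) set \<Rightarrow> 'a \<Rightarrow> 'a \<Rightarrow> bool" where "E' E x y \<longleftrightarrow> (x,y) \<in> E"

lemma is_path_alt: "is_path V E p u v \<longleftrightarrow> p \<noteq> [] \<and> hd p = u \<and> last p = v \<and> set p \<subseteq> V \<and> successively (E' E) p"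
  unfolding is_path_def E'_def succ_iff[symmetric] by simp

lemma path_append: "is_path V E p x y \<Longrightarrow> is_path V E q y z \<Longrightarrow> is_path V E (p @ tl q) x z"
  unfolding is_path_alt
  apply (cases q; cases "tl q")
  by (auto simp: successively_append_iff successively_Cons)

lemma path_take: "is_path V E p u v \<Longrightarrow> i < length p \<Longrightarrow> is_path V E (take (Suc i) p) u (p!i)"
  unfolding is_path_alt
  apply (intro conjI)
  apply simp
  apply (cases p; simp)
  apply (simp add: take_Suc_conv_app_nth)
  apply (meson order.trans set_take_subset)
  by (metis append_take_drop_id successively_append_iff)

lemma path_drop: "is_path V E p u v \<Longrightarrow> i < length p \<Longrightarrow> is_path V E (drop i p) (p!i) v"
  unfolding is_path_alt
  apply (intro conjI)
  apply simp
  apply (simp add: hd_drop_conv_nth)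
  apply simp
  apply (meson order.trans set_drop_subset)
  by (metis append_take_drop_id successively_append_iff)

lemma path_rev: "sym E \<Longrightarrow> is_path V E p u v \<Longrightarrow> is_path V E (rev p) v u"
  unfolding is_path_alt
  apply (auto simp: hd_rev last_rev)
  apply (erule successively_mono)
  by (auto simp: E'_def dest: symD)


definition dst :: "'a set \<Rightarrow> ('a \<times> 'a) set \<Rightarrow> 'a \<Rightarrow> 'a \<Rightarrow> nat" where
  "dst V E x y = (LEAST n. \<exists>q. is_path V E q x y \<and> length q = n)"

definition conn :: "'a set \<Rightarrow> ('a \<times> 'a) set \<Rightarrow> 'a \<Rightarrow> 'a \<Rightarrow> bool" where
  "conn V E x y \<longleftrightarrow> (\<exists>q. is_path V E q x y)"

lemma dst_le: "is_path V E q x y \<Longrightarrow> dst V E x y \<le> length q"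
  unfolding dst_def by (rule Least_le) blast

lemma dst_ex: "conn V E x y \<Longrightarrow> \<exists>q. is_path V E q x y \<and> length q = dst V E x y"
  unfolding dst_def conn_def by (rule LeastI_ex) blast

lemma conn_sym: assumes "sym E" "conn V E x y" shows "conn V E y x"
proof -
  obtain q where "is_path V E q x y" using assms(2) unfolding conn_def by blast
  from path_rev[OF assms(1) this] show ?thesis unfolding conn_def by blast
qed

lemma dst_sym: assumes "sym E" shows "dst V E x y = dst V E y x"
proof (cases "conn V E x y")
  case True
  then have c2: "conn V E y x" using conn_sym[OF assms] by blast
  obtain q where q: "is_path V E q x y" "length q = dst V E x y" using dst_ex[OF True] by blast
  obtain r where r: "is_path V E r y x" "length r = dst V E y x" using dst_ex[OF c2] by blast
  have "dst V E y x \<le> length q" using dst_le[OF path_rev[OF assms q(1)]] by simp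
  moreover have "dst V E x y \<le> length r" using dst_le[OF path_rev[OF assms r(1)]] by simp
  ultimately show ?thesis using q r by linarith
next
  case False
  then have F2: "\<not> conn V E y x" using conn_sym[OF assms] by blast
  have "(\<lambda>n. \<exists>q. is_path V E q x y \<and> length q = n) = (\<lambda>n. \<exists>q. is_path V E q y x \<and> length q = n)"
    using False F2 unfolding conn_def by auto
  then show ?thesis unfolding dst_def by simp
qed

lemma path_len: "is_path V E q x y \<Longrightarrow> length q \<ge> 1"
  unfolding is_path_def by (cases q) auto

lemma path_seg: "is_path V E p u v \<Longrightarrow> i \<le> j \<Longrightarrow> j < length p \<Longrightarrow>
   is_path V E (take (Suc (j-i)) (drop i p)) (p!i) (p!j)"
  using path_take[OF path_drop[of V E p u v i], of "j-i"] by simp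

lemma splice:
  assumes "is_path V E p u v" "i \<le> j" "j < length p" "is_path V E q (p!i) (p!j)"
  shows "is_path V E (take (Suc i) p @ tl (q @ tl (drop j p))) u v"
    "length (take (Suc i) p @ tl (q @ tl (drop j p))) = i + length q + length p - j - 1"
proof -
  show "is_path V E (take (Suc i) p @ tl (q @ tl (drop j p))) u v"
    by (rule path_append[OF path_take[OF assms(1)] path_append[OF assms(4) path_drop[OF assms(1)]]])
      (use assms in auto)
  show "length (take (Suc i) p @ tl (q @ tl (drop j p))) = i + length q + length p - j - 1"
    using assms path_len[OF assms(4)] by simp
qed

lemma sp_path: "p \<in> shortest_paths V E u v \<Longrightarrow> is_path V E p u v"
  unfolding shortest_paths_def by simp

lemma sp_min: "p \<in> shortest_paths V E u v \<Longrightarrow> is_path V E q u v \<Longrightarrow> length p \<le> length q"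
  unfolding shortest_paths_def by simp

lemma sp_dist:
  assumes "p \<in> shortest_paths V E u v" "i \<le> j" "j < length p"
  shows "dst V E (p!i) (p!j) = Suc (j-i)"
proof -
  have P: "is_path V E p u v" using sp_path[OF assms(1)] .
  have s: "is_path V E (take (Suc (j-i)) (drop i p)) (p!i) (p!j)" using path_seg[OF P assms(2,3)] .
  have le: "dst V E (p!i) (p!j) \<le> Suc (j-i)" using dst_le[OF s] assms by simp
  obtain q where q: "is_path V E q (p!i) (p!j)" "length q = dst V E (p!i) (p!j)"
    using dst_ex[of V E "p!i" "p!j"] s unfolding conn_def by blast
  have "length p \<le> i + length q + length p - j - 1"
    using sp_min[OF assms(1) splice(1)[OF P assms(2,3) q(1)]] splice(2)[OF P assms(2,3) q(1)] by simp
  then show ?thesis using le q assms by linarith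
qed

lemma sp_unique_pos:
  assumes "shortest_paths V E u v = {p}" "i \<le> j" "j < length p"
    "is_path V E q (p!i) (p!j)" "length q = Suc (j-i)" "k < length q"
  shows "p!(i+k) = q!k"
proof -
  have sp: "p \<in> shortest_paths V E u v" using assms(1) by blast
  have P: "is_path V E p u v" using sp_path[OF sp] .
  define r where "r = take (Suc i) p @ tl (q @ tl (drop j p))"
  have r1: "is_path V E r u v" unfolding r_def by (rule splice(1)[OF P assms(2,3,4)])
  have "length r = i + length q + length p - j - 1" unfolding r_def by (rule splice(2)[OF P assms(2,3,4)])
  then have r2: "length r = length p" using assms(2,3,5) by linarith
  have "r \<in> shortest_paths V E u v"
    using r1 r2 sp_min[OF sp] unfolding shortest_paths_def by auto
  then have rp: "r = p" using assms(1) by blast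
  show ?thesis
  proof (cases k)
    case 0
    then show ?thesis using assms(4) unfolding is_path_def by (cases q) auto
  next
    case (Suc k')
    have lt: "length (take (Suc i) p) = Suc i" using assms(2,3) by simp
    have "r!(i+k) = tl (q @ tl (drop j p)) ! k'" unfolding r_def using lt Suc by (simp add: nth_append)
    also have "\<dots> = (q @ tl (drop j p)) ! k" using Suc assms(6) by (simp add: nth_tl)
    also have "\<dots> = q!k" using assms(6) by (simp add: nth_append)
    finally show ?thesis using rp by simp
  qed
qed

lemma between:
  assumes "shortest_paths V E u v = {p}" "i \<le> j" "j < length p"
    "conn V E (p!i) z" "conn V E z (p!j)"
    "dst V E (p!i) z + dst V E z (p!j) = Suc (dst V E (p!i) (p!j))"
  shows "\<exists>k. i \<le> k \<and> k \<le> j \<and> p!k = z"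
proof -
  have sp: "p \<in> shortest_paths V E u v" using assms(1) by blast
  obtain q1 where q1: "is_path V E q1 (p!i) z" "length q1 = dst V E (p!i) z" using dst_ex[OF assms(4)] by blast
  obtain q2 where q2: "is_path V E q2 z (p!j)" "length q2 = dst V E z (p!j)" using dst_ex[OF assms(5)] by blast
  have l1: "length q1 \<ge> 1" "length q2 \<ge> 1" using path_len[OF q1(1)] path_len[OF q2(1)] by auto
  have q: "is_path V E (q1 @ tl q2) (p!i) (p!j)" using path_append[OF q1(1) q2(1)] .
  have lq: "length (q1 @ tl q2) = Suc (j - i)"
    using sp_dist[OF sp assms(2,3)] assms(6) q1 q2 l1 by simp
  have "p!(i + (length q1 - 1)) = (q1 @ tl q2)!(length q1 - 1)"
    by (rule sp_unique_pos[OF assms(1,2,3) q lq]) (use l1 in simp)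
  also have "\<dots> = q1!(length q1 - 1)" using l1 by (metis diff_less less_numeral_extra(1) nth_append order_less_le_trans)
  also have "\<dots> = last q1" using l1 by (subst last_conv_nth) auto
  also have "\<dots> = z" using q1(1) unfolding is_path_def by simp
  finally show ?thesis using lq l1 assms(2) by (intro exI[of _ "i + (length q1 - 1)"]) auto
qed

lemma sp_internal:
  assumes "p \<in> shortest_paths V E u v" "0 < k" "Suc k < length p"
  shows "p!k \<noteq> u \<and> p!k \<noteq> v"
proof -
  have P: "is_path V E p u v" using sp_path[OF assms(1)] .
  have u: "u = p!0" "v = p!(length p - 1)" using P unfolding is_path_def by (auto simp: hd_conv_nth last_conv_nth)
  have inV: "set p \<subseteq> V" using P unfolding is_path_def by simp
  have "p!k \<in> V" using inV assms by auto
  then have "is_path V E [p!k] (p!k) (p!k)" unfolding is_path_def by simp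
  from dst_le[OF this] have d0: "dst V E (p!k) (p!k) \<le> 1" by simp
  have a1: "dst V E (p!0) (p!k) = Suc k" using sp_dist[OF assms(1), of 0 k] assms by simp
  have a2: "dst V E (p!k) (p!(length p - 1)) = length p - k" using sp_dist[OF assms(1), of k "length p - 1"] assms by simp
  have "p!k \<noteq> p!0"
  proof
    assume "p!k = p!0" then show False using a1 d0 assms(2) by simp
  qed
  moreover have "p!k \<noteq> p!(length p - 1)"
  proof
    assume "p!k = p!(length p - 1)" then show False using a2 d0 assms(3) by simp
  qed
  ultimately show ?thesis using u by simp
qed

lemma dist_pos:
  assumes "sym E" "p \<in> shortest_paths V E u v" "i < length p" "j < length p"
  shows "int (dst V E (p!i) (p!j)) = \<bar>int i - int j\<bar> + 1"
proof (cases "i \<le> j")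
  case True
  then show ?thesis using sp_dist[OF assms(2) True assms(4)] by simp
next
  case False
  then have "dst V E (p!j) (p!i) = Suc (i - j)" using sp_dist[OF assms(2), of j i] assms(3) by simp
  then show ?thesis using dst_sym[OF assms(1), of V "p!i" "p!j"] False by simp
qed

lemma conn_pos:
  assumes "sym E" "is_path V E p u v" "i < length p" "j < length p"
  shows "conn V E (p!i) (p!j)"
proof (cases "i \<le> j")
  case True
  then show ?thesis using path_seg[OF assms(2) True assms(4)] unfolding conn_def by blast
next
  case False
  then have "conn V E (p!j) (p!i)" using path_seg[OF assms(2), of j i] assms(3) unfolding conn_def by auto
  then show ?thesis using conn_sym[OF assms(1)] by blast
qed

lemma pos_of:
  assumes "p \<in> shortest_paths V E u v" "w \<in> set p" "w \<noteq> u" "w \<noteq> v"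
  shows "\<exists>k. 0 < k \<and> Suc k < length p \<and> p!k = w"
proof -
  have P: "is_path V E p u v" using sp_path[OF assms(1)] .
  obtain k where k: "k < length p" "p!k = w" using assms(2) by (meson in_set_conv_nth)
  have u: "u = p!0" "v = p!(length p - 1)" using P unfolding is_path_def by (auto simp: hd_conv_nth last_conv_nth)
  have "k \<noteq> 0"
  proof assume "k = 0" then show False using k u assms(3) by simp qed
  moreover have "k \<noteq> length p - 1"
  proof assume "k = length p - 1" then show False using k u assms(4) by simp qed
  ultimately have "0 < k \<and> Suc k < length p \<and> p!k = w" using k by linarith
  then show ?thesis by blast
qed

lemma excl:
  assumes "sym E" "shortest_paths V E u v = {p}" "0 < i" "Suc i < length p" "0 < j" "Suc j < length p"
    "conn V E (p!i) z" "conn V E z (p!j)" "\<not> (z \<in> set p \<and> z \<noteq> u \<and> z \<noteq> v)"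
  shows "dst V E (p!i) z + dst V E z (p!j) \<noteq> Suc (dst V E (p!i) (p!j))"
proof
  assume eq: "dst V E (p!i) z + dst V E z (p!j) = Suc (dst V E (p!i) (p!j))"
  have sp: "p \<in> shortest_paths V E u v" using assms(2) by blast
  have "\<exists>k. min i j \<le> k \<and> k \<le> max i j \<and> p!k = z"
  proof (cases "i \<le> j")
    case True
    then show ?thesis using between[OF assms(2) True _ assms(7,8) eq] assms(6) by auto
  next
    case False
    have c1: "conn V E (p!j) z" using conn_sym[OF assms(1) assms(8)] .
    have c2: "conn V E z (p!i)" using conn_sym[OF assms(1) assms(7)] .
    have eq2: "dst V E (p!j) z + dst V E z (p!i) = Suc (dst V E (p!j) (p!i))"
      using eq dst_sym[OF assms(1), of V "p!j" z] dst_sym[OF assms(1), of V z "p!i"]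
        dst_sym[OF assms(1), of V "p!j" "p!i"] by simp
    show ?thesis using between[OF assms(2) _ _ c1 c2 eq2] False assms(4) by auto
  qed
  then obtain k where k: "min i j \<le> k" "k \<le> max i j" "p!k = z" by blast
  have "0 < k" "Suc k < length p" using k assms(3-6) by auto
  then have "p!k \<noteq> u \<and> p!k \<noteq> v" "p!k \<in> set p" using sp_internal[OF sp] by auto
  then show False using assms(9) k by auto
qed


lemma elem:
  assumes "b \<in> Dset V \<times> {0..1}" "sigma V E (fst (fst b)) (snd (fst b)) = 1" "b \<notin> Rw V E w0"
  shows "\<exists>p. shortest_paths V E (fst (fst b)) (snd (fst b)) = {p} \<and>
     (\<forall>w. b \<in> Rw V E w \<longleftrightarrow> (w \<in> set p \<and> w \<noteq> fst (fst b) \<and> w \<noteq> snd (fst b)))"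
proof -
  obtain u v x where b: "b = ((u,v),x)" by (metis prod.collapse)
  have D: "(u,v) \<in> Dset V" "0 \<le> x" "x \<le> 1" using assms(1) b by auto
  have s1: "card (shortest_paths V E u v) = 1" using assms(2) b unfolding sigma_def by simp
  then obtain p where sp: "shortest_paths V E u v = {p}" using card_1_singletonE by blast
  have sv: "\<And>w. sigma_via V E u v w = (if w \<in> set p \<and> w \<noteq> u \<and> w \<noteq> v then 1 else 0)"
  proof -
    fix w
    have "{q \<in> {p}. w \<in> set q \<and> w \<noteq> u \<and> w \<noteq> v} = (if w \<in> set p \<and> w \<noteq> u \<and> w \<noteq> v then {p} else {})" by auto
    then show "sigma_via V E u v w = (if w \<in> set p \<and> w \<noteq> u \<and> w \<noteq> v then 1 else 0)"
      unfolding sigma_via_def sp by simp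
  qed
  have fwv: "\<And>w. fw V E w u v = (if w \<in> set p \<and> w \<noteq> u \<and> w \<noteq> v then 1 else 0)"
    unfolding fw_def using sv s1 by (simp add: sigma_def)
  have "x \<noteq> 0"
  proof
    assume "x = 0"
    then have "b \<in> Rw V E w0" using D b fwv[of w0] unfolding Rw_def by auto
    then show False using assms(3) by blast
  qed
  then have xp: "0 < x" using D by simp
  have "\<forall>w. b \<in> Rw V E w \<longleftrightarrow> (w \<in> set p \<and> w \<noteq> u \<and> w \<noteq> v)"
    using D xp b fwv unfolding Rw_def by auto
  then show ?thesis using sp b by auto
qed

lemma arith: fixes dAb dAc dAd daA dab dac dad dbc dbd dcd k1A k1a k1b k1c k2A k2a k2b k2d k3A k3a k3c k3d :: int
  assumes "daA = \<bar>k1a - k1A\<bar> + 1"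
 and "k1a \<noteq> k1A"
 and "dab = \<bar>k1a - k1b\<bar> + 1"
 and "k1a \<noteq> k1b"
 and "dac = \<bar>k1a - k1c\<bar> + 1"
 and "k1a \<noteq> k1c"
 and "dAb = \<bar>k1A - k1b\<bar> + 1"
 and "k1A \<noteq> k1b"
 and "dAc = \<bar>k1A - k1c\<bar> + 1"
 and "k1A \<noteq> k1c"
 and "dbc = \<bar>k1b - k1c\<bar> + 1"
 and "k1b \<noteq> k1c"
 and "dad + dAd \<noteq> daA + 1"
 and "dad + dbd \<noteq> dab + 1"
 and "dad + dcd \<noteq> dac + 1"
 and "dAd + dbd \<noteq> dAb + 1"
 and "dAd + dcd \<noteq> dAc + 1"
 and "dbd + dcd \<noteq> dbc + 1"
 and "daA = \<bar>k2a - k2A\<bar> + 1"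
 and "k2a \<noteq> k2A"
 and "dab = \<bar>k2a - k2b\<bar> + 1"
 and "k2a \<noteq> k2b"
 and "dad = \<bar>k2a - k2d\<bar> + 1"
 and "k2a \<noteq> k2d"
 and "dAb = \<bar>k2A - k2b\<bar> + 1"
 and "k2A \<noteq> k2b"
 and "dAd = \<bar>k2A - k2d\<bar> + 1"
 and "k2A \<noteq> k2d"
 and "dbd = \<bar>k2b - k2d\<bar> + 1"
 and "k2b \<noteq> k2d"
 and "dac + dAc \<noteq> daA + 1"
 and "dac + dbc \<noteq> dab + 1"
 and "dac + dcd \<noteq> dad + 1"
 and "dAc + dbc \<noteq> dAb + 1"
 and "dAc + dcd \<noteq> dAd + 1"
 and "dbc + dcd \<noteq> dbd + 1"
 and "daA = \<bar>k3a - k3A\<bar> + 1"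
 and "k3a \<noteq> k3A"
 and "dac = \<bar>k3a - k3c\<bar> + 1"
 and "k3a \<noteq> k3c"
 and "dad = \<bar>k3a - k3d\<bar> + 1"
 and "k3a \<noteq> k3d"
 and "dAc = \<bar>k3A - k3c\<bar> + 1"
 and "k3A \<noteq> k3c"
 and "dAd = \<bar>k3A - k3d\<bar> + 1"
 and "k3A \<noteq> k3d"
 and "dcd = \<bar>k3c - k3d\<bar> + 1"
 and "k3c \<noteq> k3d"
 and "dab + dAb \<noteq> daA + 1"
 and "dab + dbc \<noteq> dac + 1"
 and "dab + dbd \<noteq> dad + 1"
 and "dAb + dbc \<noteq> dAc + 1"
 and "dAb + dbd \<noteq> dAd + 1"
 and "dbc + dbd \<noteq> dcd + 1"
  shows False
  using assms by smt

lemma core: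
  assumes sym: "sym E"
  and sp1: "shortest_paths V E u1 v1 = {p1}"
  and sp2: "shortest_paths V E u2 v2 = {p2}"
  and sp3: "shortest_paths V E u3 v3 = {p3}"
  and I1a: "a \<in> set p1 \<and> a \<noteq> u1 \<and> a \<noteq> v1"
  and I1A: "A \<in> set p1 \<and> A \<noteq> u1 \<and> A \<noteq> v1"
  and I1b: "b \<in> set p1 \<and> b \<noteq> u1 \<and> b \<noteq> v1"
  and I1c: "c \<in> set p1 \<and> c \<noteq> u1 \<and> c \<noteq> v1"
  and N1: "\<not> (d \<in> set p1 \<and> d \<noteq> u1 \<and> d \<noteq> v1)"
  and I2a: "a \<in> set p2 \<and> a \<noteq> u2 \<and> a \<noteq> v2"
  and I2A: "A \<in> set p2 \<and> A \<noteq> u2 \<and> A \<noteq> v2"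
  and I2b: "b \<in> set p2 \<and> b \<noteq> u2 \<and> b \<noteq> v2"
  and I2d: "d \<in> set p2 \<and> d \<noteq> u2 \<and> d \<noteq> v2"
  and N2: "\<not> (c \<in> set p2 \<and> c \<noteq> u2 \<and> c \<noteq> v2)"
  and I3a: "a \<in> set p3 \<and> a \<noteq> u3 \<and> a \<noteq> v3"
  and I3A: "A \<in> set p3 \<and> A \<noteq> u3 \<and> A \<noteq> v3"
  and I3c: "c \<in> set p3 \<and> c \<noteq> u3 \<and> c \<noteq> v3"
  and I3d: "d \<in> set p3 \<and> d \<noteq> u3 \<and> d \<noteq> v3"
  and N3: "\<not> (b \<in> set p3 \<and> b \<noteq> u3 \<and> b \<noteq> v3)"
  and aA: "a \<noteq> A"
  shows False
proof -
  have m1: "p1 \<in> shortest_paths V E u1 v1" using sp1 by blast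
  have P1: "is_path V E p1 u1 v1" using sp_path[OF m1] .
  have m2: "p2 \<in> shortest_paths V E u2 v2" using sp2 by blast
  have P2: "is_path V E p2 u2 v2" using sp_path[OF m2] .
  have m3: "p3 \<in> shortest_paths V E u3 v3" using sp3 by blast
  have P3: "is_path V E p3 u3 v3" using sp_path[OF m3] .
  obtain k1a where k1a: "0 < k1a" "Suc k1a < length p1" "p1!k1a = a" using pos_of[OF m1] I1a by blast
  obtain k1A where k1A: "0 < k1A" "Suc k1A < length p1" "p1!k1A = A" using pos_of[OF m1] I1A by blast
  obtain k1b where k1b: "0 < k1b" "Suc k1b < length p1" "p1!k1b = b" using pos_of[OF m1] I1b by blast
  obtain k1c where k1c: "0 < k1c" "Suc k1c < length p1" "p1!k1c = c" using pos_of[OF m1] I1c by blast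
  obtain k2a where k2a: "0 < k2a" "Suc k2a < length p2" "p2!k2a = a" using pos_of[OF m2] I2a by blast
  obtain k2A where k2A: "0 < k2A" "Suc k2A < length p2" "p2!k2A = A" using pos_of[OF m2] I2A by blast
  obtain k2b where k2b: "0 < k2b" "Suc k2b < length p2" "p2!k2b = b" using pos_of[OF m2] I2b by blast
  obtain k2d where k2d: "0 < k2d" "Suc k2d < length p2" "p2!k2d = d" using pos_of[OF m2] I2d by blast
  obtain k3a where k3a: "0 < k3a" "Suc k3a < length p3" "p3!k3a = a" using pos_of[OF m3] I3a by blast
  obtain k3A where k3A: "0 < k3A" "Suc k3A < length p3" "p3!k3A = A" using pos_of[OF m3] I3A by blast
  obtain k3c where k3c: "0 < k3c" "Suc k3c < length p3" "p3!k3c = c" using pos_of[OF m3] I3c by blast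
  obtain k3d where k3d: "0 < k3d" "Suc k3d < length p3" "p3!k3d = d" using pos_of[OF m3] I3d by blast
  have ne_ab: "a \<noteq> b" using I3a N3 by blast
  have ne_ac: "a \<noteq> c" using I2a N2 by blast
  have ne_ad: "a \<noteq> d" using I1a N1 by blast
  have ne_Ab: "A \<noteq> b" using I3A N3 by blast
  have ne_Ac: "A \<noteq> c" using I2A N2 by blast
  have ne_Ad: "A \<noteq> d" using I1A N1 by blast
  have ne_bc: "b \<noteq> c" using I2b N2 by blast
  have ne_bd: "b \<noteq> d" using I1b N1 by blast
  have ne_cd: "c \<noteq> d" using I1c N1 by blast
  note ne_aA = aA
  have c_aA: "conn V E a A" using conn_pos[OF sym P1, of k1a k1A] k1a k1A by simp
  have c_ab: "conn V E a b" using conn_pos[OF sym P1, of k1a k1b] k1a k1b by simp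
  have c_ac: "conn V E a c" using conn_pos[OF sym P1, of k1a k1c] k1a k1c by simp
  have c_ad: "conn V E a d" using conn_pos[OF sym P2, of k2a k2d] k2a k2d by simp
  have c_Aa: "conn V E A a" using conn_pos[OF sym P1, of k1A k1a] k1A k1a by simp
  have c_Ab: "conn V E A b" using conn_pos[OF sym P1, of k1A k1b] k1A k1b by simp
  have c_Ac: "conn V E A c" using conn_pos[OF sym P1, of k1A k1c] k1A k1c by simp
  have c_Ad: "conn V E A d" using conn_pos[OF sym P2, of k2A k2d] k2A k2d by simp
  have c_ba: "conn V E b a" using conn_pos[OF sym P1, of k1b k1a] k1b k1a by simp
  have c_bA: "conn V E b A" using conn_pos[OF sym P1, of k1b k1A] k1b k1A by simp
  have c_bc: "conn V E b c" using conn_pos[OF sym P1, of k1b k1c] k1b k1c by simp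
  have c_bd: "conn V E b d" using conn_pos[OF sym P2, of k2b k2d] k2b k2d by simp
  have c_ca: "conn V E c a" using conn_pos[OF sym P1, of k1c k1a] k1c k1a by simp
  have c_cA: "conn V E c A" using conn_pos[OF sym P1, of k1c k1A] k1c k1A by simp
  have c_cb: "conn V E c b" using conn_pos[OF sym P1, of k1c k1b] k1c k1b by simp
  have c_cd: "conn V E c d" using conn_pos[OF sym P3, of k3c k3d] k3c k3d by simp
  have c_da: "conn V E d a" using conn_pos[OF sym P2, of k2d k2a] k2d k2a by simp
  have c_dA: "conn V E d A" using conn_pos[OF sym P2, of k2d k2A] k2d k2A by simp
  have c_db: "conn V E d b" using conn_pos[OF sym P2, of k2d k2b] k2d k2b by simp
  have c_dc: "conn V E d c" using conn_pos[OF sym P3, of k3d k3c] k3d k3c by simp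
  have s_Aa: "dst V E A a = dst V E a A" using dst_sym[OF sym] .
  have s_ba: "dst V E b a = dst V E a b" using dst_sym[OF sym] .
  have s_ca: "dst V E c a = dst V E a c" using dst_sym[OF sym] .
  have s_da: "dst V E d a = dst V E a d" using dst_sym[OF sym] .
  have s_bA: "dst V E b A = dst V E A b" using dst_sym[OF sym] .
  have s_cA: "dst V E c A = dst V E A c" using dst_sym[OF sym] .
  have s_dA: "dst V E d A = dst V E A d" using dst_sym[OF sym] .
  have s_cb: "dst V E c b = dst V E b c" using dst_sym[OF sym] .
  have s_db: "dst V E d b = dst V E b d" using dst_sym[OF sym] .
  have s_dc: "dst V E d c = dst V E c d" using dst_sym[OF sym] .
  have f1: "int (dst V E a A) = \<bar>int k1a - int k1A\<bar> + 1" using dist_pos[OF sym m1, of k1a k1A] k1a k1A by simp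
  have f2: "int k1a \<noteq> int k1A" using k1a k1A ne_aA by auto
  have f3: "int (dst V E a b) = \<bar>int k1a - int k1b\<bar> + 1" using dist_pos[OF sym m1, of k1a k1b] k1a k1b by simp
  have f4: "int k1a \<noteq> int k1b" using k1a k1b ne_ab by auto
  have f5: "int (dst V E a c) = \<bar>int k1a - int k1c\<bar> + 1" using dist_pos[OF sym m1, of k1a k1c] k1a k1c by simp
  have f6: "int k1a \<noteq> int k1c" using k1a k1c ne_ac by auto
  have f7: "int (dst V E A b) = \<bar>int k1A - int k1b\<bar> + 1" using dist_pos[OF sym m1, of k1A k1b] k1A k1b by simp
  have f8: "int k1A \<noteq> int k1b" using k1A k1b ne_Ab by auto
  have f9: "int (dst V E A c) = \<bar>int k1A - int k1c\<bar> + 1" using dist_pos[OF sym m1, of k1A k1c] k1A k1c by simp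
  have f10: "int k1A \<noteq> int k1c" using k1A k1c ne_Ac by auto
  have f11: "int (dst V E b c) = \<bar>int k1b - int k1c\<bar> + 1" using dist_pos[OF sym m1, of k1b k1c] k1b k1c by simp
  have f12: "int k1b \<noteq> int k1c" using k1b k1c ne_bc by auto
  have "dst V E a d + dst V E d A \<noteq> Suc (dst V E a A)" using excl[OF sym sp1 k1a(1,2) k1A(1,2), of d] k1a(3) k1A(3) c_ad c_dA N1 by simp
  then have f13: "int (dst V E a d) + int (dst V E A d) \<noteq> int (dst V E a A) + 1" using s_dA by simp
  have "dst V E a d + dst V E d b \<noteq> Suc (dst V E a b)" using excl[OF sym sp1 k1a(1,2) k1b(1,2), of d] k1a(3) k1b(3) c_ad c_db N1 by simp
  then have f14: "int (dst V E a d) + int (dst V E b d) \<noteq> int (dst V E a b) + 1" using s_db by simp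
  have "dst V E a d + dst V E d c \<noteq> Suc (dst V E a c)" using excl[OF sym sp1 k1a(1,2) k1c(1,2), of d] k1a(3) k1c(3) c_ad c_dc N1 by simp
  then have f15: "int (dst V E a d) + int (dst V E c d) \<noteq> int (dst V E a c) + 1" using s_dc by simp
  have "dst V E A d + dst V E d b \<noteq> Suc (dst V E A b)" using excl[OF sym sp1 k1A(1,2) k1b(1,2), of d] k1A(3) k1b(3) c_Ad c_db N1 by simp
  then have f16: "int (dst V E A d) + int (dst V E b d) \<noteq> int (dst V E A b) + 1" using s_db by simp
  have "dst V E A d + dst V E d c \<noteq> Suc (dst V E A c)" using excl[OF sym sp1 k1A(1,2) k1c(1,2), of d] k1A(3) k1c(3) c_Ad c_dc N1 by simp
  then have f17: "int (dst V E A d) + int (dst V E c d) \<noteq> int (dst V E A c) + 1" using s_dc by simp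
  have "dst V E b d + dst V E d c \<noteq> Suc (dst V E b c)" using excl[OF sym sp1 k1b(1,2) k1c(1,2), of d] k1b(3) k1c(3) c_bd c_dc N1 by simp
  then have f18: "int (dst V E b d) + int (dst V E c d) \<noteq> int (dst V E b c) + 1" using s_dc by simp
  have f19: "int (dst V E a A) = \<bar>int k2a - int k2A\<bar> + 1" using dist_pos[OF sym m2, of k2a k2A] k2a k2A by simp
  have f20: "int k2a \<noteq> int k2A" using k2a k2A ne_aA by auto
  have f21: "int (dst V E a b) = \<bar>int k2a - int k2b\<bar> + 1" using dist_pos[OF sym m2, of k2a k2b] k2a k2b by simp
  have f22: "int k2a \<noteq> int k2b" using k2a k2b ne_ab by auto
  have f23: "int (dst V E a d) = \<bar>int k2a - int k2d\<bar> + 1" using dist_pos[OF sym m2, of k2a k2d] k2a k2d by simp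
  have f24: "int k2a \<noteq> int k2d" using k2a k2d ne_ad by auto
  have f25: "int (dst V E A b) = \<bar>int k2A - int k2b\<bar> + 1" using dist_pos[OF sym m2, of k2A k2b] k2A k2b by simp
  have f26: "int k2A \<noteq> int k2b" using k2A k2b ne_Ab by auto
  have f27: "int (dst V E A d) = \<bar>int k2A - int k2d\<bar> + 1" using dist_pos[OF sym m2, of k2A k2d] k2A k2d by simp
  have f28: "int k2A \<noteq> int k2d" using k2A k2d ne_Ad by auto
  have f29: "int (dst V E b d) = \<bar>int k2b - int k2d\<bar> + 1" using dist_pos[OF sym m2, of k2b k2d] k2b k2d by simp
  have f30: "int k2b \<noteq> int k2d" using k2b k2d ne_bd by auto
  have "dst V E a c + dst V E c A \<noteq> Suc (dst V E a A)" using excl[OF sym sp2 k2a(1,2) k2A(1,2), of c] k2a(3) k2A(3) c_ac c_cA N2 by simp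
  then have f31: "int (dst V E a c) + int (dst V E A c) \<noteq> int (dst V E a A) + 1" using s_cA by simp
  have "dst V E a c + dst V E c b \<noteq> Suc (dst V E a b)" using excl[OF sym sp2 k2a(1,2) k2b(1,2), of c] k2a(3) k2b(3) c_ac c_cb N2 by simp
  then have f32: "int (dst V E a c) + int (dst V E b c) \<noteq> int (dst V E a b) + 1" using s_cb by simp
  have "dst V E a c + dst V E c d \<noteq> Suc (dst V E a d)" using excl[OF sym sp2 k2a(1,2) k2d(1,2), of c] k2a(3) k2d(3) c_ac c_cd N2 by simp
  then have f33: "int (dst V E a c) + int (dst V E c d) \<noteq> int (dst V E a d) + 1"  by simp
  have "dst V E A c + dst V E c b \<noteq> Suc (dst V E A b)" using excl[OF sym sp2 k2A(1,2) k2b(1,2), of c] k2A(3) k2b(3) c_Ac c_cb N2 by simp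
  then have f34: "int (dst V E A c) + int (dst V E b c) \<noteq> int (dst V E A b) + 1" using s_cb by simp
  have "dst V E A c + dst V E c d \<noteq> Suc (dst V E A d)" using excl[OF sym sp2 k2A(1,2) k2d(1,2), of c] k2A(3) k2d(3) c_Ac c_cd N2 by simp
  then have f35: "int (dst V E A c) + int (dst V E c d) \<noteq> int (dst V E A d) + 1"  by simp
  have "dst V E b c + dst V E c d \<noteq> Suc (dst V E b d)" using excl[OF sym sp2 k2b(1,2) k2d(1,2), of c] k2b(3) k2d(3) c_bc c_cd N2 by simp
  then have f36: "int (dst V E b c) + int (dst V E c d) \<noteq> int (dst V E b d) + 1"  by simp
  have f37: "int (dst V E a A) = \<bar>int k3a - int k3A\<bar> + 1" using dist_pos[OF sym m3, of k3a k3A] k3a k3A by simp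
  have f38: "int k3a \<noteq> int k3A" using k3a k3A ne_aA by auto
  have f39: "int (dst V E a c) = \<bar>int k3a - int k3c\<bar> + 1" using dist_pos[OF sym m3, of k3a k3c] k3a k3c by simp
  have f40: "int k3a \<noteq> int k3c" using k3a k3c ne_ac by auto
  have f41: "int (dst V E a d) = \<bar>int k3a - int k3d\<bar> + 1" using dist_pos[OF sym m3, of k3a k3d] k3a k3d by simp
  have f42: "int k3a \<noteq> int k3d" using k3a k3d ne_ad by auto
  have f43: "int (dst V E A c) = \<bar>int k3A - int k3c\<bar> + 1" using dist_pos[OF sym m3, of k3A k3c] k3A k3c by simp
  have f44: "int k3A \<noteq> int k3c" using k3A k3c ne_Ac by auto
  have f45: "int (dst V E A d) = \<bar>int k3A - int k3d\<bar> + 1" using dist_pos[OF sym m3, of k3A k3d] k3A k3d by simp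
  have f46: "int k3A \<noteq> int k3d" using k3A k3d ne_Ad by auto
  have f47: "int (dst V E c d) = \<bar>int k3c - int k3d\<bar> + 1" using dist_pos[OF sym m3, of k3c k3d] k3c k3d by simp
  have f48: "int k3c \<noteq> int k3d" using k3c k3d ne_cd by auto
  have "dst V E a b + dst V E b A \<noteq> Suc (dst V E a A)" using excl[OF sym sp3 k3a(1,2) k3A(1,2), of b] k3a(3) k3A(3) c_ab c_bA N3 by simp
  then have f49: "int (dst V E a b) + int (dst V E A b) \<noteq> int (dst V E a A) + 1" using s_bA by simp
  have "dst V E a b + dst V E b c \<noteq> Suc (dst V E a c)" using excl[OF sym sp3 k3a(1,2) k3c(1,2), of b] k3a(3) k3c(3) c_ab c_bc N3 by simp
  then have f50: "int (dst V E a b) + int (dst V E b c) \<noteq> int (dst V E a c) + 1"  by simp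
  have "dst V E a b + dst V E b d \<noteq> Suc (dst V E a d)" using excl[OF sym sp3 k3a(1,2) k3d(1,2), of b] k3a(3) k3d(3) c_ab c_bd N3 by simp
  then have f51: "int (dst V E a b) + int (dst V E b d) \<noteq> int (dst V E a d) + 1"  by simp
  have "dst V E A b + dst V E b c \<noteq> Suc (dst V E A c)" using excl[OF sym sp3 k3A(1,2) k3c(1,2), of b] k3A(3) k3c(3) c_Ab c_bc N3 by simp
  then have f52: "int (dst V E A b) + int (dst V E b c) \<noteq> int (dst V E A c) + 1"  by simp
  have "dst V E A b + dst V E b d \<noteq> Suc (dst V E A d)" using excl[OF sym sp3 k3A(1,2) k3d(1,2), of b] k3A(3) k3d(3) c_Ab c_bd N3 by simp
  then have f53: "int (dst V E A b) + int (dst V E b d) \<noteq> int (dst V E A d) + 1"  by simp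
  have "dst V E c b + dst V E b d \<noteq> Suc (dst V E c d)" using excl[OF sym sp3 k3c(1,2) k3d(1,2), of b] k3c(3) k3d(3) c_cb c_bd N3 by simp
  then have f54: "int (dst V E b c) + int (dst V E b d) \<noteq> int (dst V E c d) + 1" using s_cb by simp
  show False by (rule arith[OF f1 f2 f3 f4 f5 f6 f7 f8 f9 f10 f11 f12 f13 f14 f15 f16 f17 f18 f19 f20 f21 f22 f23 f24 f25 f26 f27 f28 f29 f30 f31 f32 f33 f34 f35 f36 f37 f38 f39 f40 f41 f42 f43 f44 f45 f46 f47 f48 f49 f50 f51 f52 f53 f54])
qed

theorem lemma3:
  fixes V :: "'a set" and E :: "('a \<times> 'a) set"
  assumes "ugraph V E"
  shows "\<not> (\<exists>B :: (('a \<times> 'a) \<times> real) set.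
            B \<subseteq> Dset V \<times> {0..1} \<and> card B = 4 \<and>
            shattered (Rw V E ` V) B \<and>
            (\<exists>b1 b2 b3. b1 \<in> B \<and> b2 \<in> B \<and> b3 \<in> B \<and>
               b1 \<noteq> b2 \<and> b1 \<noteq> b3 \<and> b2 \<noteq> b3 \<and>
               sigma V E (fst (fst b1)) (snd (fst b1)) = 1 \<and>
               sigma V E (fst (fst b2)) (snd (fst b2)) = 1 \<and>
               sigma V E (fst (fst b3)) (snd (fst b3)) = 1))"
proof
  assume "\<exists>B :: (('a \<times> 'a) \<times> real) set.
            B \<subseteq> Dset V \<times> {0..1} \<and> card B = 4 \<and>
            shattered (Rw V E ` V) B \<and>
            (\<exists>b1 b2 b3. b1 \<in> B \<and> b2 \<in> B \<and> b3 \<in> B \<and>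
               b1 \<noteq> b2 \<and> b1 \<noteq> b3 \<and> b2 \<noteq> b3 \<and>
               sigma V E (fst (fst b1)) (snd (fst b1)) = 1 \<and>
               sigma V E (fst (fst b2)) (snd (fst b2)) = 1 \<and>
               sigma V E (fst (fst b3)) (snd (fst b3)) = 1)"
  then obtain B :: "(('a \<times> 'a) \<times> real) set" and b1 b2 b3 where
    B: "B \<subseteq> Dset V \<times> {0..1}" "card B = 4" "shattered (Rw V E ` V) B"
    and bs: "b1 \<in> B" "b2 \<in> B" "b3 \<in> B" "b1 \<noteq> b2" "b1 \<noteq> b3" "b2 \<noteq> b3"
    and sg: "sigma V E (fst (fst b1)) (snd (fst b1)) = 1"
      "sigma V E (fst (fst b2)) (snd (fst b2)) = 1"
      "sigma V E (fst (fst b3)) (snd (fst b3)) = 1"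
    by blast
  have sym: "sym E" using assms unfolding ugraph_def by blast
  have sh: "\<exists>w\<in>V. Rw V E w \<inter> B = T" if "T \<subseteq> B" for T
  proof -
    have "T \<in> (\<lambda>R. R \<inter> B) ` (Rw V E ` V)" using B(3) that unfolding shattered_def by blast
    then show ?thesis by blast
  qed
  obtain w0 where w0: "w0 \<in> V" "Rw V E w0 \<inter> B = {}" using sh[of "{}"] by blast
  have fin: "finite B" using B(2) card.infinite by fastforce
  have "\<not> B \<subseteq> {b1, b2, b3}"
  proof
    assume "B \<subseteq> {b1, b2, b3}"
    then have "card B \<le> card {b1, b2, b3}" by (intro card_mono) auto
    also have "\<dots> \<le> 3" by (simp add: card_insert_if)
    finally show False using B(2) by simp
  qed
  then obtain b4 where b4: "b4 \<in> B" "b4 \<notin> {b1, b2, b3}" by blast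
  obtain p1 where p1: "shortest_paths V E (fst (fst b1)) (snd (fst b1)) = {p1}"
    "\<forall>w. b1 \<in> Rw V E w \<longleftrightarrow> (w \<in> set p1 \<and> w \<noteq> fst (fst b1) \<and> w \<noteq> snd (fst b1))"
    using elem[of b1 V E w0] B(1) bs sg w0 by blast
  obtain p2 where p2: "shortest_paths V E (fst (fst b2)) (snd (fst b2)) = {p2}"
    "\<forall>w. b2 \<in> Rw V E w \<longleftrightarrow> (w \<in> set p2 \<and> w \<noteq> fst (fst b2) \<and> w \<noteq> snd (fst b2))"
    using elem[of b2 V E w0] B(1) bs sg w0 by blast
  obtain p3 where p3: "shortest_paths V E (fst (fst b3)) (snd (fst b3)) = {p3}"
    "\<forall>w. b3 \<in> Rw V E w \<longleftrightarrow> (w \<in> set p3 \<and> w \<noteq> fst (fst b3) \<and> w \<noteq> snd (fst b3))"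
    using elem[of b3 V E w0] B(1) bs sg w0 by blast
  obtain wa where wa: "Rw V E wa \<inter> B = {b1, b2, b3}" using sh[of "{b1, b2, b3}"] bs by blast
  obtain wA where wA: "Rw V E wA \<inter> B = B" using sh[of B] by blast
  obtain wb where wb: "Rw V E wb \<inter> B = {b1, b2}" using sh[of "{b1, b2}"] bs by blast
  obtain wc where wc: "Rw V E wc \<inter> B = {b1, b3}" using sh[of "{b1, b3}"] bs by blast
  obtain wd where wd: "Rw V E wd \<inter> B = {b2, b3}" using sh[of "{b2, b3}"] bs by blast
  have mem: "\<And>w b T. Rw V E w \<inter> B = T \<Longrightarrow> b \<in> B \<Longrightarrow> b \<in> Rw V E w \<longleftrightarrow> b \<in> T" by blast
  have aA: "wa \<noteq> wA"
  proof
    assume "wa = wA"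
    then have "b4 \<in> Rw V E wa" using wA b4 by blast
    then show False using wa b4 by blast
  qed
  have r_a1: "b1 \<in> Rw V E wa" using wa bs by blast
  have I1a: "wa \<in> set p1 \<and> wa \<noteq> fst (fst b1) \<and> wa \<noteq> snd (fst b1)" using p1(2)[THEN spec, of wa] r_a1 by blast
  have r_a2: "b2 \<in> Rw V E wa" using wa bs by blast
  have I2a: "wa \<in> set p2 \<and> wa \<noteq> fst (fst b2) \<and> wa \<noteq> snd (fst b2)" using p2(2)[THEN spec, of wa] r_a2 by blast
  have r_a3: "b3 \<in> Rw V E wa" using wa bs by blast
  have I3a: "wa \<in> set p3 \<and> wa \<noteq> fst (fst b3) \<and> wa \<noteq> snd (fst b3)" using p3(2)[THEN spec, of wa] r_a3 by blast
  have r_A1: "b1 \<in> Rw V E wA" using wA bs by blast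
  have I1A: "wA \<in> set p1 \<and> wA \<noteq> fst (fst b1) \<and> wA \<noteq> snd (fst b1)" using p1(2)[THEN spec, of wA] r_A1 by blast
  have r_A2: "b2 \<in> Rw V E wA" using wA bs by blast
  have I2A: "wA \<in> set p2 \<and> wA \<noteq> fst (fst b2) \<and> wA \<noteq> snd (fst b2)" using p2(2)[THEN spec, of wA] r_A2 by blast
  have r_A3: "b3 \<in> Rw V E wA" using wA bs by blast
  have I3A: "wA \<in> set p3 \<and> wA \<noteq> fst (fst b3) \<and> wA \<noteq> snd (fst b3)" using p3(2)[THEN spec, of wA] r_A3 by blast
  have r_b1: "b1 \<in> Rw V E wb" using wb bs by blast
  have I1b: "wb \<in> set p1 \<and> wb \<noteq> fst (fst b1) \<and> wb \<noteq> snd (fst b1)" using p1(2)[THEN spec, of wb] r_b1 by blast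
  have r_b2: "b2 \<in> Rw V E wb" using wb bs by blast
  have I2b: "wb \<in> set p2 \<and> wb \<noteq> fst (fst b2) \<and> wb \<noteq> snd (fst b2)" using p2(2)[THEN spec, of wb] r_b2 by blast
  have r_b3: "b3 \<notin> Rw V E wb"
  proof
    assume "b3 \<in> Rw V E wb"
    then have "b3 \<in> Rw V E wb \<inter> B" using bs by blast
    then show False using wb bs by auto
  qed
  have N3: "\<not> (wb \<in> set p3 \<and> wb \<noteq> fst (fst b3) \<and> wb \<noteq> snd (fst b3))" using p3(2)[THEN spec, of wb] r_b3 by blast
  have r_c1: "b1 \<in> Rw V E wc" using wc bs by blast
  have I1c: "wc \<in> set p1 \<and> wc \<noteq> fst (fst b1) \<and> wc \<noteq> snd (fst b1)" using p1(2)[THEN spec, of wc] r_c1 by blast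
  have r_c2: "b2 \<notin> Rw V E wc"
  proof
    assume "b2 \<in> Rw V E wc"
    then have "b2 \<in> Rw V E wc \<inter> B" using bs by blast
    then show False using wc bs by auto
  qed
  have N2: "\<not> (wc \<in> set p2 \<and> wc \<noteq> fst (fst b2) \<and> wc \<noteq> snd (fst b2))" using p2(2)[THEN spec, of wc] r_c2 by blast
  have r_c3: "b3 \<in> Rw V E wc" using wc bs by blast
  have I3c: "wc \<in> set p3 \<and> wc \<noteq> fst (fst b3) \<and> wc \<noteq> snd (fst b3)" using p3(2)[THEN spec, of wc] r_c3 by blast
  have r_d1: "b1 \<notin> Rw V E wd"
  proof
    assume "b1 \<in> Rw V E wd"
    then have "b1 \<in> Rw V E wd \<inter> B" using bs by blast
    then show False using wd bs by auto
  qed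
  have N1: "\<not> (wd \<in> set p1 \<and> wd \<noteq> fst (fst b1) \<and> wd \<noteq> snd (fst b1))" using p1(2)[THEN spec, of wd] r_d1 by blast
  have r_d2: "b2 \<in> Rw V E wd" using wd bs by blast
  have I2d: "wd \<in> set p2 \<and> wd \<noteq> fst (fst b2) \<and> wd \<noteq> snd (fst b2)" using p2(2)[THEN spec, of wd] r_d2 by blast
  have r_d3: "b3 \<in> Rw V E wd" using wd bs by blast
  have I3d: "wd \<in> set p3 \<and> wd \<noteq> fst (fst b3) \<and> wd \<noteq> snd (fst b3)" using p3(2)[THEN spec, of wd] r_d3 by blast
  show False by (rule core[OF sym p1(1) p2(1) p3(1) I1a I1A I1b I1c N1 I2a I2A I2b I2d N2 I3a I3A I3c I3d N3 aA])
qed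

end
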